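(* Assume ${\bf v}$ has the RCI property and is completely irrational. Then $$\Xi_{\bf v}=\bigcup_{J\subset\{1,\dots,d\}}\big\{\mathcal{L}^J_{{\bf v},x}: x\in\mathtt X^J_{\bf v}\big\}\;\cup\;\bigcup_{i=1}^d\Xi_{{\bf v}\setminus i},$$ and consequently $$\Xi_{\bf v}=\bigcup_{\emptyset\neq I\subset\{1,\dots,d\}}\ \bigcup_{J\subset I}\big\{\mathcal{L}^J_{{\bf v}_I,x}: x\in\mathtt X^J_{{\bf v}_I}\big\}\;\cup\;\{\mathbb{Z}^D\}.$$
   Context: Let $D\ge d\ge1$ be integers and ${\bf v}=\{v_1,\dots,v_d\}$ a set of linearly independent unit vectors in $\mathbb{R}^D$. For $I\subset\{1,\dots,d\}$ write ${\bf v}_I=\{v_i\}_{i\in I}$, ${\bf v}\setminus i:={\bf v}_{\{1,\dots,d\}\setminus\{i\}}$, $\mathcal{L}_{{\bf v}_I}:=\{n\in\mathbb{Z}^D: v_i\cdot n\ge0\ \forall i\in I\}$ (so $\mathcal{L}_{{\bf v}_\emptyset}=\mathbb{Z}^D$, $\mathcal{L}_{\bf v}:=\mathcal{L}_{{\bf v}_{\{1,\dots,d\}}}$), $A_{{\bf v}_I}z=(v_i\cdot z)_{i\in I}$, and $\mathcal{X}_{{\bf v}_I}:=\overline{A_{{\bf v}_I}(\mathcal{L}_{{\bf v}_I})}\subset[0,\infty)^I$. Subsets of $\mathbb{Z}^D$ carry the Fell topology (= product topology on $\{0,1\}^{\mathbb{Z}^D}$). $\Xi_{{\bf v}_I}:=\overline{\{\mathcal{L}_{{\bf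 v}_I}-n: n\in\mathcal{L}_{{\bf v}_I}\}}$, $\Xi_\emptyset=\{\mathbb{Z}^D\}$, $\Xi_{\bf v}:=\Xi_{{\bf v}_{\{1,\dots,d\}}}$. For nonempty $I$, ${\bf v}_I$ is rational (R) if $A_{{\bf v}_I}(\mathcal{L}_{{\bf v}_I})$ is a closed, discrete, finitely generated subsemigroup of $[0,\infty)^I$, and completely irrational (CI) if $\mathcal{X}_{{\bf v}_I}=[0,\infty)^I$; ${\bf v}$ has the RCI property if every ${\bf v}_I$ with $\emptyset\neq I\subsetneq\{1,\dots,d\}$ is R or CI. For $J\subset I$, $x\in\mathbb{R}^I$: $\mathcal{L}^J_{{\bf v}_I,x}:=\{n\in\mathbb{Z}^D: v_k\cdot n+x_k>0\ (k\in J),\ v_k\cdot n+x_k\ge0\ (k\in I\setminus J)\}$; $\mathtt X^\emptyset_{{\bf v}_I}:=\mathcal{X}_{{\bf v}_I}$ and for $J\ne\emptyset$, $\mathtt X^J_{{\bf v}_I}:=\{x\in\mathcal{X}_{{\bf v}_I}:\forall k\in J\ \exists n\in\mathbb{Z}^D,\ x_k=v_k\cdot n\neq0\}$; $\mathtt X^J_{\bf v}$ is the case $I=\{1,\dots,d\}$. *)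

theory Defs
  imports "HOL-Analysis.Analysis"
begin

text \<open>The ambient dimension D is the cardinality of a finite index type 'n;
  lattice points n \<in> \<int>^D are elements of int^'n, embedded into real^'n by lat.
  The family v = {v_1,...,v_d} is a function v :: nat \<Rightarrow> real^'n, used on {1..d}.
  A point of \<real>^I (I \<subseteq> {1..d}) is a function nat \<Rightarrow> real vanishing outside I;
  \<real>^I carries the topology induced from the product topology of nat \<Rightarrow> real,
  which on functions vanishing outside the finite set I is the Euclidean topology.\<close>

definition lat :: "int^'n \<Rightarrow> real^'n" where
  "lat z = (\<chi> i. of_int (z $ i))"

definition Lcone :: "(nat \<Rightarrow> real^'n) \<Rightarrow> nat set \<Rightarrow> (int^'n) set" where
  "Lcone v I = {z. \<forall>i\<in>I. v i \<bullet> lat z \<ge> 0}"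

definition Amap :: "(nat \<Rightarrow> real^'n) \<Rightarrow> nat set \<Rightarrow> real^'n \<Rightarrow> (nat \<Rightarrow> real)" where
  "Amap v I y = (\<lambda>k. if k \<in> I then v k \<bullet> y else 0)"

definition Xset :: "(nat \<Rightarrow> real^'n) \<Rightarrow> nat set \<Rightarrow> (nat \<Rightarrow> real) set" where
  "Xset v I = closure ((\<lambda>z. Amap v I (lat z)) ` Lcone v I)"

text \<open>The Fell topology on subsets of \<int>^D, i.e. the product topology on {0,1}^(\<int>^D),
  sets being identified with their characteristic functions.\<close>
definition fell_topology :: "((int^'n) \<Rightarrow> bool) topology" where
  "fell_topology = product_topology (\<lambda>_. discrete_topology (UNIV :: bool set)) UNIV"

definition fell_closure :: "(int^'n) set set \<Rightarrow> (int^'n) set set" where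
  "fell_closure S = {A. (\<lambda>z. z \<in> A) \<in> fell_topology closure_of ((\<lambda>B z. z \<in> B) ` S)}"

definition Xi :: "(nat \<Rightarrow> real^'n) \<Rightarrow> nat set \<Rightarrow> (int^'n) set set" where
  "Xi v I = fell_closure {(\<lambda>m. m - z) ` Lcone v I | z. z \<in> Lcone v I}"

definition discrete_set :: "(nat \<Rightarrow> real) set \<Rightarrow> bool" where
  "discrete_set S \<longleftrightarrow> (\<forall>x\<in>S. \<exists>U. open U \<and> U \<inter> S = {x})"

definition fin_gen_subsemigroup :: "nat set \<Rightarrow> (nat \<Rightarrow> real) set \<Rightarrow> bool" where
  "fin_gen_subsemigroup I S \<longleftrightarrow>
     S \<subseteq> {x. (\<forall>k\<in>I. x k \<ge> 0) \<and> (\<forall>k. k \<notin> I \<longrightarrow> x k = 0)} \<and>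
     (\<forall>x\<in>S. \<forall>y\<in>S. (\<lambda>k. x k + y k) \<in> S) \<and>
     (\<exists>G. finite G \<and> G \<subseteq> S \<and> S = {(\<lambda>k. \<Sum>g\<in>G. real (c g) * g k) | c. True})"

definition rational :: "(nat \<Rightarrow> real^'n) \<Rightarrow> nat set \<Rightarrow> bool" where
  "rational v I \<longleftrightarrow>
     (let S = (\<lambda>z. Amap v I (lat z)) ` Lcone v I in
        closed S \<and> discrete_set S \<and> fin_gen_subsemigroup I S)"

definition completely_irrational :: "(nat \<Rightarrow> real^'n) \<Rightarrow> nat set \<Rightarrow> bool" where
  "completely_irrational v I \<longleftrightarrow>
     Xset v I = {x. (\<forall>k\<in>I. x k \<ge> 0) \<and> (\<forall>k. k \<notin> I \<longrightarrow> x k = 0)}"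

definition RCI :: "(nat \<Rightarrow> real^'n) \<Rightarrow> nat \<Rightarrow> bool" where
  "RCI v d \<longleftrightarrow> (\<forall>I. I \<noteq> {} \<and> I \<subset> {1..d} \<longrightarrow> rational v I \<or> completely_irrational v I)"

definition LJ :: "(nat \<Rightarrow> real^'n) \<Rightarrow> nat set \<Rightarrow> nat set \<Rightarrow> (nat \<Rightarrow> real) \<Rightarrow> (int^'n) set" where
  "LJ v I J x = {z. (\<forall>k\<in>J. v k \<bullet> lat z + x k > 0) \<and> (\<forall>k\<in>I - J. v k \<bullet> lat z + x k \<ge> 0)}"

definition XJ :: "(nat \<Rightarrow> real^'n) \<Rightarrow> nat set \<Rightarrow> nat set \<Rightarrow> (nat \<Rightarrow> real) set" where
  "XJ v I J = {x \<in> Xset v I. \<forall>k\<in>J. \<exists>z. x k = v k \<bullet> lat z \<and> x k \<noteq> 0}"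

end

theory Submission
  imports Defs
begin


lemma tendsto_fun_iff:
  fixes f :: "'x \<Rightarrow> 'a \<Rightarrow> 'b::topological_space"
  shows "(f \<longlongrightarrow> g) F \<longleftrightarrow> (\<forall>k. ((\<lambda>j. f j k) \<longlongrightarrow> g k) F)"
  using limitin_componentwise[of "\<lambda>_. euclidean" UNIV f g F]
  by (simp add: euclidean_product_topology)

lemma lat_add: "lat (a + b) = lat a + lat b"
  by (simp add: lat_def vec_eq_iff)
lemma lat_minus: "lat (- a) = - lat a"
  by (simp add: lat_def vec_eq_iff)

lemma shift_mem: "m \<in> (\<lambda>m. m - z) ` Lcone v I \<longleftrightarrow> m + z \<in> Lcone v I"
  by (auto simp: image_iff intro!: bexI[of _ "m + z"])

lemma Lcone_add: "m + z \<in> Lcone v I \<longleftrightarrow> (\<forall>k\<in>I. v k \<bullet> lat m + v k \<bullet> lat z \<ge> 0)"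
  by (simp add: Lcone_def lat_add inner_add_right)

lemma fell_closure_char:
  "A \<in> fell_closure S \<longleftrightarrow> (\<forall>F. finite F \<longrightarrow> (\<exists>B\<in>S. \<forall>m\<in>F. (m \<in> B \<longleftrightarrow> m \<in> A)))"
proof
  assume h: "A \<in> fell_closure S"
  show "\<forall>F. finite F \<longrightarrow> (\<exists>B\<in>S. \<forall>m\<in>F. (m \<in> B \<longleftrightarrow> m \<in> A))"
  proof (intro allI impI)
    fix F :: "(int^'a) set" assume fF: "finite F"
    define U where "U = (\<lambda>i. if i \<in> F then {i \<in> A} else (UNIV::bool set))"
    have op: "openin fell_topology (Pi\<^sub>E UNIV U)"
      unfolding fell_topology_def openin_product_topology_alt
    proof (intro ballI exI conjI)
      fix x assume "x \<in> Pi\<^sub>E UNIV U"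
      show "finite {i \<in> UNIV. U i \<noteq> topspace (discrete_topology UNIV)}"
        using fF by (auto simp: U_def intro: finite_subset[of _ F])
    qed auto
    have mem: "(\<lambda>z. z \<in> A) \<in> Pi\<^sub>E UNIV U" by (auto simp: U_def)
    from h op mem obtain y where "y \<in> (\<lambda>B z. z \<in> B) ` S" "y \<in> Pi\<^sub>E UNIV U"
      unfolding fell_closure_def in_closure_of by blast
    then obtain B where B: "B \<in> S" "(\<lambda>z. z \<in> B) \<in> Pi\<^sub>E UNIV U" by blast
    have "\<forall>m\<in>F. (m \<in> B \<longleftrightarrow> m \<in> A)"
    proof
      fix m assume "m \<in> F"
      have "(m \<in> B) \<in> U m" using B(2) by (simp add: PiE_iff)
      moreover have "U m = {m \<in> A}" using \<open>m \<in> F\<close> by (simp add: U_def)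
      ultimately show "m \<in> B \<longleftrightarrow> m \<in> A" by simp
    qed
    with B(1) show "\<exists>B\<in>S. \<forall>m\<in>F. (m \<in> B \<longleftrightarrow> m \<in> A)" by blast
  qed
next
  assume h: "\<forall>F. finite F \<longrightarrow> (\<exists>B\<in>S. \<forall>m\<in>F. (m \<in> B \<longleftrightarrow> m \<in> A))"
  show "A \<in> fell_closure S"
    unfolding fell_closure_def in_closure_of mem_Collect_eq
  proof (intro conjI allI impI)
    show "(\<lambda>z. z \<in> A) \<in> topspace fell_topology" by (simp add: fell_topology_def)
    fix T assume T: "(\<lambda>z. z \<in> A) \<in> T \<and> openin fell_topology T"
    then obtain U where U: "finite {i \<in> UNIV. U i \<noteq> UNIV}" "(\<lambda>z. z \<in> A) \<in> Pi\<^sub>E UNIV U" "Pi\<^sub>E UNIV U \<subseteq> T"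
      unfolding fell_topology_def openin_product_topology_alt by force
    from h U(1) obtain B where B: "B \<in> S" "\<forall>m\<in>{i. U i \<noteq> UNIV}. (m \<in> B \<longleftrightarrow> m \<in> A)" by auto
    have "(\<lambda>z. z \<in> B) \<in> Pi\<^sub>E UNIV U"
      unfolding PiE_iff
    proof (intro conjI ballI)
      fix i :: "int^'a" assume "i \<in> UNIV"
      show "(i \<in> B) \<in> U i"
      proof (cases "U i = UNIV")
        case False
        then have "(i \<in> B) = (i \<in> A)" using B(2) by simp
        moreover have "(i \<in> A) \<in> U i" using U(2) by (simp add: PiE_iff)
        ultimately show ?thesis by simp
      qed simp
    qed simp
    with B(1) U(3) show "\<exists>y. y \<in> (\<lambda>B z. z \<in> B) ` S \<and> y \<in> T" by blast
  qed
qed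

lemma Xi_char:
  "A \<in> Xi v I \<longleftrightarrow> (\<forall>F. finite F \<longrightarrow> (\<exists>z\<in>Lcone v I. \<forall>m\<in>F. (m + z \<in> Lcone v I \<longleftrightarrow> m \<in> A)))"
proof -
  have "(\<exists>B\<in>{(\<lambda>m. m - z) ` Lcone v I | z. z \<in> Lcone v I}. \<forall>m\<in>F. (m \<in> B \<longleftrightarrow> m \<in> A))
      \<longleftrightarrow> (\<exists>z\<in>Lcone v I. \<forall>m\<in>F. (m + z \<in> Lcone v I \<longleftrightarrow> m \<in> A))" for F
  proof
    assume "\<exists>B\<in>{(\<lambda>m. m - z) ` Lcone v I | z. z \<in> Lcone v I}. \<forall>m\<in>F. (m \<in> B \<longleftrightarrow> m \<in> A)"
    then obtain z where "z \<in> Lcone v I" "\<forall>m\<in>F. (m \<in> (\<lambda>m. m - z) ` Lcone v I \<longleftrightarrow> m \<in> A)" by blast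
    then show "\<exists>z\<in>Lcone v I. \<forall>m\<in>F. (m + z \<in> Lcone v I \<longleftrightarrow> m \<in> A)" by (auto simp: shift_mem)
  next
    assume "\<exists>z\<in>Lcone v I. \<forall>m\<in>F. (m + z \<in> Lcone v I \<longleftrightarrow> m \<in> A)"
    then obtain z where "z \<in> Lcone v I" "\<forall>m\<in>F. (m \<in> (\<lambda>m. m - z) ` Lcone v I \<longleftrightarrow> m \<in> A)"
      by (auto simp: shift_mem)
    then show "\<exists>B\<in>{(\<lambda>m. m - z) ` Lcone v I | z. z \<in> Lcone v I}. \<forall>m\<in>F. (m \<in> B \<longleftrightarrow> m \<in> A)" by blast
  qed
  then show ?thesis unfolding Xi_def fell_closure_char by simp
qed



definition nbox :: "nat set \<Rightarrow> (nat \<Rightarrow> real) set" where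
  "nbox I = {x. (\<forall>k\<in>I. x k \<ge> 0) \<and> (\<forall>k. k \<notin> I \<longrightarrow> x k = 0)}"

lemma CI_def': "completely_irrational v I \<longleftrightarrow> Xset v I = nbox I"
  by (simp add: completely_irrational_def nbox_def)

lemma seq_of_Xset:
  assumes "y \<in> Xset v I"
  shows "\<exists>z. (\<forall>j. z j \<in> Lcone v I) \<and> (\<forall>k. (\<lambda>j. Amap v I (lat (z j)) k) \<longlonglongrightarrow> y k)"
proof -
  from assms obtain s where s: "\<forall>n. s n \<in> (\<lambda>z. Amap v I (lat z)) ` Lcone v I" "s \<longlonglongrightarrow> y"
    unfolding Xset_def closure_sequential by blast
  from s(1) have "\<forall>n. \<exists>z. z \<in> Lcone v I \<and> s n = Amap v I (lat z)" by blast
  then obtain z where z: "\<forall>n. z n \<in> Lcone v I \<and> s n = Amap v I (lat (z n))" by metis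
  have "s = (\<lambda>j. Amap v I (lat (z j)))" using z by auto
  with s(2) z show ?thesis by (auto simp: tendsto_fun_iff)
qed

lemma Xset_of_seq:
  assumes "\<forall>j. z j \<in> Lcone v I" "\<forall>k. (\<lambda>j. Amap v I (lat (z j)) k) \<longlonglongrightarrow> y k"
  shows "y \<in> Xset v I"
  unfolding Xset_def closure_sequential
  using assms by (intro exI[of _ "\<lambda>j. Amap v I (lat (z j))"]) (auto simp: tendsto_fun_iff)

lemma Amap_nonneg: "z \<in> Lcone v I \<Longrightarrow> k \<in> I \<Longrightarrow> Amap v I (lat z) k \<ge> 0"
  by (simp add: Amap_def Lcone_def)

lemma Xset_sub_box: "Xset v I \<subseteq> nbox I"
proof
  fix y assume "y \<in> Xset v I"
  then obtain z where z: "\<forall>j. z j \<in> Lcone v I" "\<forall>k. (\<lambda>j. Amap v I (lat (z j)) k) \<longlonglongrightarrow> y k"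
    using seq_of_Xset by blast
  have "y k \<ge> 0" if "k \<in> I" for k
    using z that by (intro LIMSEQ_le_const[of "\<lambda>j. Amap v I (lat (z j)) k"]) (auto intro: Amap_nonneg)
  moreover have "y k = 0" if "k \<notin> I" for k
  proof -
    have "(\<lambda>j. Amap v I (lat (z j)) k) = (\<lambda>j. 0)" using that by (simp add: Amap_def)
    then show ?thesis using z(2) LIMSEQ_unique tendsto_const by metis
  qed
  ultimately show "y \<in> nbox I" by (simp add: nbox_def)
qed

lemma CI_sub:
  assumes "completely_irrational v I0" "I \<subseteq> I0"
  shows "completely_irrational v I"
  unfolding CI_def'
proof
  show "Xset v I \<subseteq> nbox I" by (rule Xset_sub_box)
  show "nbox I \<subseteq> Xset v I"
  proof
    fix y assume y: "y \<in> nbox I"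
    then have "y \<in> nbox I0" using assms(2) by (auto simp: nbox_def)
    then have "y \<in> Xset v I0" using assms(1) by (simp add: CI_def')
    then obtain z where z: "\<forall>j. z j \<in> Lcone v I0" "\<forall>k. (\<lambda>j. Amap v I0 (lat (z j)) k) \<longlonglongrightarrow> y k"
      using seq_of_Xset by blast
    show "y \<in> Xset v I"
    proof (rule Xset_of_seq[of z])
      show "\<forall>j. z j \<in> Lcone v I" using z(1) assms(2) by (auto simp: Lcone_def)
      show "\<forall>k. (\<lambda>j. Amap v I (lat (z j)) k) \<longlonglongrightarrow> y k"
      proof
        fix k show "(\<lambda>j. Amap v I (lat (z j)) k) \<longlonglongrightarrow> y k"
        proof (cases "k \<in> I")
          case True
          have "(\<lambda>j. Amap v I0 (lat (z j)) k) \<longlonglongrightarrow> y k" using z(2) by blast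
          moreover have "k \<in> I0" using True assms(2) by blast
          ultimately show ?thesis using True by (simp add: Amap_def)
        next
          case False
          then show ?thesis using y by (simp add: Amap_def nbox_def)
        qed
      qed
    qed
  qed
qed

lemma CI_approx:
  assumes "completely_irrational v I" "finite I" "y \<in> nbox I" "\<epsilon> > 0"
  shows "\<exists>z\<in>Lcone v I. \<forall>k\<in>I. \<bar>v k \<bullet> lat z - y k\<bar> < \<epsilon>"
proof -
  have "y \<in> Xset v I" using assms by (simp add: CI_def')
  then obtain z where z: "\<forall>j. z j \<in> Lcone v I" "\<forall>k. (\<lambda>j. Amap v I (lat (z j)) k) \<longlonglongrightarrow> y k"
    using seq_of_Xset by blast
  have ev: "\<forall>k\<in>I. eventually (\<lambda>j. dist (Amap v I (lat (z j)) k) (y k) < \<epsilon>) sequentially"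
  proof
    fix k assume "k \<in> I"
    show "eventually (\<lambda>j. dist (Amap v I (lat (z j)) k) (y k) < \<epsilon>) sequentially"
      by (rule tendstoD[OF spec[OF z(2)] assms(4)])
  qed
  have "eventually (\<lambda>j. \<forall>k\<in>I. dist (Amap v I (lat (z j)) k) (y k) < \<epsilon>) sequentially"
    by (rule eventually_ball_finite[OF assms(2) ev])
  then obtain N where N: "\<forall>j\<ge>N. \<forall>k\<in>I. dist (Amap v I (lat (z j)) k) (y k) < \<epsilon>"
    unfolding eventually_sequentially by blast
  have "\<forall>k\<in>I. \<bar>v k \<bullet> lat (z N) - y k\<bar> < \<epsilon>"
  proof
    fix k assume "k \<in> I"
    then have "dist (Amap v I (lat (z N)) k) (y k) < \<epsilon>" using N by blast
    then show "\<bar>v k \<bullet> lat (z N) - y k\<bar> < \<epsilon>" using \<open>k \<in> I\<close> by (simp add: Amap_def dist_real_def)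
  qed
  then show ?thesis using z(1) by blast
qed

lemma finite_margin:
  fixes T :: "real set"
  assumes "finite T"
  shows "\<exists>\<delta>>0. \<forall>t\<in>T. t \<noteq> 0 \<longrightarrow> \<delta> \<le> \<bar>t\<bar>"
proof -
  let ?S = "insert 1 (abs ` (T - {0}))"
  have "finite ?S" using assms by simp
  moreover have "\<forall>s\<in>?S. s > 0" by auto
  ultimately have "Min ?S > 0" by simp
  moreover have "\<forall>t\<in>T. t \<noteq> 0 \<longrightarrow> Min ?S \<le> \<bar>t\<bar>" using \<open>finite ?S\<close> by auto
  ultimately show ?thesis by blast
qed

lemma finite_bound:
  fixes T :: "real set"
  assumes "finite T"
  shows "\<exists>M\<ge>0. \<forall>t\<in>T. \<bar>t\<bar> \<le> M"
proof -
  let ?S = "insert 0 (abs ` T)"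
  have "finite ?S" using assms by simp
  then show ?thesis by (intro exI[of _ "Max ?S"]) auto
qed



lemma real_aux1:
  fixes s x a \<delta> :: real
  assumes "\<delta> > 0" "s + x \<noteq> 0 \<longrightarrow> \<delta> \<le> \<bar>s + x\<bar>" "x - \<delta> < a" "a < x"
  shows "0 \<le> s + a \<longleftrightarrow> 0 < s + x"
  using assms by (cases "s + x = 0") (auto simp: abs_if split: if_splits)

lemma real_aux2:
  fixes s x a \<delta> :: real
  assumes "\<delta> > 0" "s + x \<noteq> 0 \<longrightarrow> \<delta> \<le> \<bar>s + x\<bar>" "x < a" "a < x + \<delta>"
  shows "0 \<le> s + a \<longleftrightarrow> 0 \<le> s + x"
  using assms by (cases "s + x = 0") (auto simp: abs_if split: if_splits)

lemma real_aux3: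
  fixes s x a \<delta> :: real
  assumes "\<delta> > 0" "\<delta> \<le> \<bar>s + x\<bar>" "\<bar>a - x\<bar> < \<delta>"
  shows "(0 \<le> s + a \<longleftrightarrow> 0 < s + x) \<and> (0 \<le> s + a \<longleftrightarrow> 0 \<le> s + x)"
  using assms by (auto simp: abs_if split: if_splits)

lemma Xset_nonneg:
  assumes "x \<in> Xset v I" "k \<in> I" shows "x k \<ge> 0"
  using Xset_sub_box assms by (auto simp: nbox_def)

lemma sup_LJ:
  assumes ci: "completely_irrational v I" and fI: "finite I" and JI: "J \<subseteq> I"
    and x: "x \<in> XJ v I J"
  shows "LJ v I J x \<in> Xi v I"
  unfolding Xi_char
proof (intro allI impI)
  fix F :: "(int^'a) set" assume fF: "finite F"
  have xX: "x \<in> Xset v I" using x by (simp add: XJ_def)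
  then have xb: "x \<in> nbox I" using Xset_sub_box by blast
  have xJpos: "x k > 0" if "k \<in> J" for k
  proof -
    have "x k \<noteq> 0" using x that by (auto simp: XJ_def)
    moreover have "x k \<ge> 0" using xX JI that Xset_nonneg by blast
    ultimately show ?thesis by simp
  qed
  define T where "T = (\<lambda>(k, m). v k \<bullet> lat m + x k) ` (I \<times> F) \<union> x ` J"
  have "finite J" using finite_subset[OF JI fI] .
  then have "finite T" unfolding T_def using fI fF by simp
  then obtain \<delta> where \<delta>: "\<delta> > 0" "\<forall>t\<in>T. t \<noteq> 0 \<longrightarrow> \<delta> \<le> \<bar>t\<bar>"
    using finite_margin by blast
  have \<delta>J: "\<delta> \<le> x k" if "k \<in> J" for k
  proof -
    have "x k \<in> T" unfolding T_def using that by blast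
    then show ?thesis using \<delta>(2) xJpos[OF that] by fastforce
  qed
  have \<delta>m: "v k \<bullet> lat m + x k \<noteq> 0 \<longrightarrow> \<delta> \<le> \<bar>v k \<bullet> lat m + x k\<bar>" if "k \<in> I" "m \<in> F" for k m
  proof -
    have "v k \<bullet> lat m + x k \<in> T" unfolding T_def
      using that by (intro UnI1 rev_image_eqI[of "(k, m)"]) auto
    then show ?thesis using \<delta>(2) by blast
  qed
  define y where "y = (\<lambda>k. if k \<in> J then x k - \<delta>/2 else if k \<in> I then x k + \<delta>/2 else 0)"
  have yb: "y \<in> nbox I"
    unfolding nbox_def
  proof (intro CollectI conjI ballI allI impI)
    fix k assume k: "k \<in> I"
    show "0 \<le> y k"
    proof (cases "k \<in> J")
      case True
      then have "\<delta> \<le> x k" by (rule \<delta>J)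
      then show ?thesis using True \<delta>(1) by (simp add: y_def)
    next
      case False
      have "x k \<ge> 0" using xb k by (simp add: nbox_def)
      then show ?thesis using False k \<delta>(1) by (simp add: y_def)
    qed
  next
    fix k assume "k \<notin> I"
    then show "y k = 0" using JI by (auto simp: y_def)
  qed
  obtain z where z: "z \<in> Lcone v I" "\<forall>k\<in>I. \<bar>v k \<bullet> lat z - y k\<bar> < \<delta>/2"
    using CI_approx[OF ci fI yb, of "\<delta>/2"] \<delta>(1) by auto
  have "\<forall>m\<in>F. (m + z \<in> Lcone v I \<longleftrightarrow> m \<in> LJ v I J x)"
  proof
    fix m assume m: "m \<in> F"
    have eqJ: "0 \<le> v k \<bullet> lat m + v k \<bullet> lat z \<longleftrightarrow> 0 < v k \<bullet> lat m + x k" if "k \<in> J" for k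
    proof (rule real_aux1[OF \<delta>(1)])
      have kI: "k \<in> I" using that JI by blast
      show "v k \<bullet> lat m + x k \<noteq> 0 \<longrightarrow> \<delta> \<le> \<bar>v k \<bullet> lat m + x k\<bar>" using \<delta>m[OF kI m] .
      have "\<bar>v k \<bullet> lat z - y k\<bar> < \<delta>/2" using z(2) kI by blast
      moreover have "y k = x k - \<delta>/2" using that by (simp add: y_def)
      ultimately have "\<bar>v k \<bullet> lat z - (x k - \<delta>/2)\<bar> < \<delta>/2" by simp
      then show "x k - \<delta> < v k \<bullet> lat z" "v k \<bullet> lat z < x k" unfolding abs_less_iff by linarith+
    qed
    have eqI: "0 \<le> v k \<bullet> lat m + v k \<bullet> lat z \<longleftrightarrow> 0 \<le> v k \<bullet> lat m + x k" if "k \<in> I - J" for k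
    proof (rule real_aux2[OF \<delta>(1)])
      have kI: "k \<in> I" using that by blast
      show "v k \<bullet> lat m + x k \<noteq> 0 \<longrightarrow> \<delta> \<le> \<bar>v k \<bullet> lat m + x k\<bar>" using \<delta>m[OF kI m] .
      have "\<bar>v k \<bullet> lat z - y k\<bar> < \<delta>/2" using z(2) kI by blast
      moreover have "y k = x k + \<delta>/2" using that by (simp add: y_def)
      ultimately have "\<bar>v k \<bullet> lat z - (x k + \<delta>/2)\<bar> < \<delta>/2" by simp
      then show "x k < v k \<bullet> lat z" "v k \<bullet> lat z < x k + \<delta>" unfolding abs_less_iff by linarith+
    qed
    have "m + z \<in> Lcone v I \<longleftrightarrow> (\<forall>k\<in>I. 0 \<le> v k \<bullet> lat m + v k \<bullet> lat z)"
      by (rule Lcone_add)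
    also have "\<dots> \<longleftrightarrow> (\<forall>k\<in>J. 0 < v k \<bullet> lat m + x k) \<and> (\<forall>k\<in>I - J. 0 \<le> v k \<bullet> lat m + x k)"
      using eqJ eqI JI by blast
    also have "\<dots> \<longleftrightarrow> m \<in> LJ v I J x" by (simp add: LJ_def)
    finally show "m + z \<in> Lcone v I \<longleftrightarrow> m \<in> LJ v I J x" .
  qed
  then show "\<exists>z\<in>Lcone v I. \<forall>m\<in>F. (m + z \<in> Lcone v I \<longleftrightarrow> m \<in> LJ v I J x)"
    using z(1) by blast
qed

lemma sup_sub:
  assumes ci: "completely_irrational v I" and fI: "finite I" and iI: "i \<in> I"
    and A: "A \<in> Xi v (I - {i})"
  shows "A \<in> Xi v I"
  unfolding Xi_char
proof (intro allI impI)
  fix F :: "(int^'a) set" assume fF: "finite F"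
  obtain z0 where z0: "z0 \<in> Lcone v (I - {i})" "\<forall>m\<in>F. (m + z0 \<in> Lcone v (I - {i}) \<longleftrightarrow> m \<in> A)"
    using A fF unfolding Xi_char by blast
  define T where "T = (\<lambda>(k, m). v k \<bullet> lat (m + z0)) ` (I \<times> insert 0 F)"
  have "finite T" unfolding T_def using fI fF by blast
  then obtain \<delta> where \<delta>: "\<delta> > 0" "\<forall>t\<in>T. t \<noteq> 0 \<longrightarrow> \<delta> \<le> \<bar>t\<bar>"
    using finite_margin by blast
  obtain M where M: "M \<ge> 0" "\<forall>t\<in>T. \<bar>t\<bar> \<le> M" using finite_bound[OF \<open>finite T\<close>] by blast
  have \<delta>m: "v k \<bullet> lat (m + z0) \<noteq> 0 \<longrightarrow> \<delta> \<le> \<bar>v k \<bullet> lat (m + z0)\<bar>" if "k \<in> I" "m \<in> F" for k m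
    using \<delta>(2) that unfolding T_def by force
  have Mm: "\<bar>v i \<bullet> lat (m + z0)\<bar> \<le> M" if "m \<in> insert 0 F" for m
    using M(2) that iI unfolding T_def by force
  define \<epsilon> where "\<epsilon> = min \<delta> 1"
  have \<epsilon>: "\<epsilon> > 0" "\<epsilon> \<le> \<delta>" "\<epsilon> \<le> 1" using \<delta> by (auto simp: \<epsilon>_def)
  define y where "y = (\<lambda>k. if k = i then M + 1 else 0::real)"
  have yb: "y \<in> nbox I" using iI M(1) by (auto simp: y_def nbox_def)
  obtain w where w: "w \<in> Lcone v I" "\<forall>k\<in>I. \<bar>v k \<bullet> lat w - y k\<bar> < \<epsilon>"
    using CI_approx[OF ci fI yb \<epsilon>(1)] by blast
  have wi: "v i \<bullet> lat w > M" using w(2) iI \<epsilon>(3) by (force simp: y_def)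
  have wk: "0 \<le> v k \<bullet> lat w \<and> v k \<bullet> lat w < \<delta>" if "k \<in> I - {i}" for k
  proof -
    have kI: "k \<in> I" "k \<noteq> i" using that by auto
    then have "\<bar>v k \<bullet> lat w - y k\<bar> < \<epsilon>" using w(2) by blast
    moreover have "y k = 0" using kI by (simp add: y_def)
    moreover have "0 \<le> v k \<bullet> lat w" using w(1) kI by (simp add: Lcone_def)
    ultimately show ?thesis using \<epsilon>(2) by auto
  qed
  have z0k: "0 \<le> v k \<bullet> lat z0" if "k \<in> I - {i}" for k
    using z0(1) that by (simp add: Lcone_def)
  have "z0 + w \<in> Lcone v I"
    unfolding Lcone_def
  proof (intro CollectI ballI)
    fix k assume k: "k \<in> I"
    show "0 \<le> v k \<bullet> lat (z0 + w)"
    proof (cases "k = i")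
      case True
      have "\<bar>v i \<bullet> lat (0 + z0)\<bar> \<le> M" using Mm by blast
      then show ?thesis using True wi by (simp add: lat_add inner_add_right)
    next
      case False
      then show ?thesis using wk[of k] z0k[of k] k by (simp add: lat_add inner_add_right)
    qed
  qed
  moreover have "\<forall>m\<in>F. (m + (z0 + w) \<in> Lcone v I \<longleftrightarrow> m \<in> A)"
  proof
    fix m assume m: "m \<in> F"
    have "m + (z0 + w) \<in> Lcone v I \<longleftrightarrow> (\<forall>k\<in>I. 0 \<le> v k \<bullet> lat (m + z0) + v k \<bullet> lat w)"
      using Lcone_add[of "m + z0" w v I] by (simp add: add.assoc)
    also have "\<dots> \<longleftrightarrow> (\<forall>k\<in>I - {i}. 0 \<le> v k \<bullet> lat (m + z0))"
    proof -
      have "0 \<le> v i \<bullet> lat (m + z0) + v i \<bullet> lat w" using Mm[of m] m wi by auto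
      moreover have "0 \<le> v k \<bullet> lat (m + z0) + v k \<bullet> lat w \<longleftrightarrow> 0 \<le> v k \<bullet> lat (m + z0)"
        if "k \<in> I - {i}" for k
      proof -
        have "k \<in> I" using that by blast
        from \<delta>m[OF this m] wk[OF that] show ?thesis by (auto simp: abs_if split: if_splits)
      qed
      ultimately show ?thesis using iI by blast
    qed
    also have "\<dots> \<longleftrightarrow> m + z0 \<in> Lcone v (I - {i})" by (simp add: Lcone_def)
    also have "\<dots> \<longleftrightarrow> m \<in> A" using z0(2) m by blast
    finally show "m + (z0 + w) \<in> Lcone v I \<longleftrightarrow> m \<in> A" .
  qed
  ultimately show "\<exists>z\<in>Lcone v I. \<forall>m\<in>F. (m + z \<in> Lcone v I \<longleftrightarrow> m \<in> A)" by blast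
qed



lemma Xi_seq:
  assumes "A \<in> Xi v I"
  shows "\<exists>z. (\<forall>j. z j \<in> Lcone v I) \<and> (\<forall>m j. to_nat m \<le> j \<longrightarrow> (m + z j \<in> Lcone v I \<longleftrightarrow> m \<in> A))"
proof -
  have "\<forall>j. \<exists>z. z \<in> Lcone v I \<and> (\<forall>m\<in>to_nat -` {..j}. (m + z \<in> Lcone v I \<longleftrightarrow> m \<in> A))"
  proof
    fix j
    have "finite (to_nat -` {..j} :: (int^'a) set)"
      by (rule finite_vimageI[OF finite_atMost inj_to_nat])
    then show "\<exists>z. z \<in> Lcone v I \<and> (\<forall>m\<in>to_nat -` {..j}. (m + z \<in> Lcone v I \<longleftrightarrow> m \<in> A))"
      using assms unfolding Xi_char by blast
  qed
  then obtain z where "\<forall>j. z j \<in> Lcone v I \<and> (\<forall>m\<in>to_nat -` {..j}. (m + z j \<in> Lcone v I \<longleftrightarrow> m \<in> A))"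
    by metis
  then show ?thesis by (intro exI[of _ z]) auto
qed

lemma subseq_pattern:
  fixes f :: "nat \<Rightarrow> nat \<Rightarrow> real"
  assumes "finite K" "\<forall>k\<in>K. bounded (range (\<lambda>j. f j k))"
  shows "\<exists>r x P. strict_mono r \<and> (\<forall>k\<in>K. (\<lambda>j. f (r j) k) \<longlonglongrightarrow> x k) \<and> P \<subseteq> K \<and>
           (\<forall>j. \<forall>k\<in>K. (f (r j) k < x k \<longleftrightarrow> k \<in> P))"
  using assms
proof (induction K rule: finite_induct)
  case empty
  show ?case by (intro exI[of _ "\<lambda>j. j"] exI[of _ "\<lambda>_. 0"] exI[of _ "{}"]) (auto simp: strict_mono_def)
next
  case (insert k K)
  then obtain r x P where IH: "strict_mono r" "\<forall>k\<in>K. (\<lambda>j. f (r j) k) \<longlonglongrightarrow> x k" "P \<subseteq> K"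
    "\<forall>j. \<forall>k\<in>K. (f (r j) k < x k \<longleftrightarrow> k \<in> P)" by auto
  have "bounded (range (\<lambda>j. f j k))" using insert.prems by simp
  then have "bounded (range (\<lambda>j. f (r j) k))" by (rule bounded_subset) auto
  then obtain l r1 where r1: "strict_mono r1" "((\<lambda>j. f (r j) k) \<circ> r1) \<longlonglongrightarrow> l"
    using bounded_imp_convergent_subsequence by blast
  define S where "S = {j. f (r (r1 j)) k < l}"
  obtain r2 :: "nat \<Rightarrow> nat" and b :: bool where r2: "strict_mono r2" "\<forall>j. (f (r (r1 (r2 j))) k < l) = b"
  proof (cases "infinite S")
    case True
    then obtain r2 :: "nat \<Rightarrow> nat" where r2: "strict_mono r2" "\<forall>n. r2 n \<in> S" using infinite_enumerate by blast
    have "\<forall>j. (f (r (r1 (r2 j))) k < l) = True" using r2(2) by (simp add: S_def)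
    then show ?thesis by (rule that[OF r2(1)])
  next
    case False
    then have "infinite (UNIV - S)" by (simp add: Diff_infinite_finite)
    then obtain r2 :: "nat \<Rightarrow> nat" where r2: "strict_mono r2" "\<forall>n. r2 n \<in> UNIV - S" using infinite_enumerate by blast
    have "\<forall>j. (f (r (r1 (r2 j))) k < l) = False" using r2(2) by (simp add: S_def)
    then show ?thesis by (rule that[OF r2(1)])
  qed
  define r' where "r' = r \<circ> r1 \<circ> r2"
  define x' where "x' = x(k := l)"
  define P' where "P' = (if b then insert k P else P)"
  have sm: "strict_mono (r1 \<circ> r2)" using r1(1) r2(1) by (rule strict_mono_o)
  have "strict_mono r'" unfolding r'_def using IH(1) sm by (simp add: strict_mono_o comp_assoc)
  moreover have "\<forall>k'\<in>insert k K. (\<lambda>j. f (r' j) k') \<longlonglongrightarrow> x' k'"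
  proof
    fix k' assume k': "k' \<in> insert k K"
    show "(\<lambda>j. f (r' j) k') \<longlonglongrightarrow> x' k'"
    proof (cases "k' = k")
      case True
      have "(((\<lambda>j. f (r j) k) \<circ> r1) \<circ> r2) \<longlonglongrightarrow> l" using LIMSEQ_subseq_LIMSEQ[OF r1(2) r2(1)] .
      then show ?thesis using True by (simp add: r'_def x'_def o_def)
    next
      case False
      then have "k' \<in> K" using k' by simp
      then have "((\<lambda>j. f (r j) k') \<circ> (r1 \<circ> r2)) \<longlonglongrightarrow> x k'" using LIMSEQ_subseq_LIMSEQ[OF _ sm] IH(2) by blast
      then show ?thesis using False by (simp add: r'_def x'_def o_def)
    qed
  qed
  moreover have "P' \<subseteq> insert k K" using IH(3) by (auto simp: P'_def)
  moreover have "\<forall>j. \<forall>k'\<in>insert k K. (f (r' j) k' < x' k' \<longleftrightarrow> k' \<in> P')"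
  proof (intro allI ballI)
    fix j k' assume k': "k' \<in> insert k K"
    show "f (r' j) k' < x' k' \<longleftrightarrow> k' \<in> P'"
    proof (cases "k' = k")
      case True
      have "k \<notin> P" using IH(3) insert.hyps(2) by blast
      then show ?thesis using True r2(2) by (auto simp: r'_def x'_def P'_def)
    next
      case False
      then have "k' \<in> K" using k' by simp
      then have "f (r (r1 (r2 j))) k' < x k' \<longleftrightarrow> k' \<in> P" using IH(4) by blast
      then show ?thesis using False by (auto simp: r'_def x'_def P'_def)
    qed
  qed
  ultimately show ?case by blast
qed



lemma sub_dir:
  assumes ci: "completely_irrational v I" and fI: "finite I" and A: "A \<in> Xi v I"
  shows "(\<exists>J\<in>Pow I. \<exists>x. x \<in> XJ v I J \<and> A = LJ v I J x) \<or> (\<exists>i\<in>I. A \<in> Xi v (I - {i}))"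
proof -
  obtain z where z: "\<forall>j. z j \<in> Lcone v I" "\<forall>m j. to_nat m \<le> j \<longrightarrow> (m + z j \<in> Lcone v I \<longleftrightarrow> m \<in> A)"
    using Xi_seq[OF A] by blast
  define a where "a = (\<lambda>j k. v k \<bullet> lat (z j))"
  have a_nn: "a j k \<ge> 0" if "k \<in> I" for j k using z(1) that by (simp add: a_def Lcone_def)
  have zmem: "m \<in> A \<longleftrightarrow> (\<forall>k\<in>I. 0 \<le> v k \<bullet> lat m + a j k)" if "to_nat m \<le> j" for m j
    using z(2) that Lcone_add[of m "z j" v I] by (simp add: a_def)
  show ?thesis
  proof (cases "\<exists>i\<in>I. \<not> (\<exists>B. \<forall>j. a j i \<le> B)")
    case True
    then obtain i where i: "i \<in> I" "\<not> (\<exists>B. \<forall>j. a j i \<le> B)" by blast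
    have big: "\<exists>j\<ge>N. a j i \<ge> M" for N M
    proof (rule ccontr)
      assume "\<not> (\<exists>j\<ge>N. a j i \<ge> M)"
      then have lt: "\<forall>j\<ge>N. a j i < M" by auto
      define B where "B = Max (insert M ((\<lambda>j. a j i) ` {..<N}))"
      have "a j i \<le> B" for j
      proof (cases "j < N")
        case True
        then show ?thesis unfolding B_def by (intro Max_ge) auto
      next
        case False
        then have "a j i < M" using lt by auto
        moreover have "M \<le> B" unfolding B_def by (intro Max_ge) auto
        ultimately show ?thesis by simp
      qed
      then show False using i(2) by blast
    qed
    have "A \<in> Xi v (I - {i})" unfolding Xi_char
    proof (intro allI impI)
      fix F :: "(int^'a) set" assume fF: "finite F"
      define N where "N = Max (insert 0 (to_nat ` F))"
      have N: "to_nat m \<le> N" if "m \<in> F" for m using fF that unfolding N_def by (intro Max_ge) auto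
      obtain M where M: "M \<ge> 0" "\<forall>t\<in>(\<lambda>m. v i \<bullet> lat m) ` F. \<bar>t\<bar> \<le> M"
        using finite_bound[of "(\<lambda>m. v i \<bullet> lat m) ` F"] fF by blast
      obtain j where j: "j \<ge> N" "a j i \<ge> M" using big by blast
      have "z j \<in> Lcone v (I - {i})" using z(1) by (auto simp: Lcone_def)
      moreover have "\<forall>m\<in>F. (m + z j \<in> Lcone v (I - {i}) \<longleftrightarrow> m \<in> A)"
      proof
        fix m assume m: "m \<in> F"
        have "m \<in> A \<longleftrightarrow> (\<forall>k\<in>I. 0 \<le> v k \<bullet> lat m + a j k)" using zmem[of m j] N[OF m] j(1) by simp
        moreover have "0 \<le> v i \<bullet> lat m + a j i" using M(2) m j(2) by force
        ultimately have "m \<in> A \<longleftrightarrow> (\<forall>k\<in>I - {i}. 0 \<le> v k \<bullet> lat m + a j k)" using i(1) by blast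
        then show "m + z j \<in> Lcone v (I - {i}) \<longleftrightarrow> m \<in> A"
          using Lcone_add[of m "z j" v "I - {i}"] by (simp add: a_def)
      qed
      ultimately show "\<exists>z\<in>Lcone v (I - {i}). \<forall>m\<in>F. (m + z \<in> Lcone v (I - {i}) \<longleftrightarrow> m \<in> A)" by blast
    qed
    then show ?thesis using i(1) by blast
  next
    case False
    have bnd: "\<forall>k\<in>I. bounded (range (\<lambda>j. a j k))"
    proof
      fix k assume k: "k \<in> I"
      then obtain B where B: "\<forall>j. a j k \<le> B" using False by blast
      have "\<forall>t\<in>range (\<lambda>j. a j k). \<bar>t\<bar> \<le> B" using B a_nn[OF k] by auto
      then show "bounded (range (\<lambda>j. a j k))" unfolding bounded_real by blast
    qed
    obtain r x P where rx: "strict_mono r" "\<forall>k\<in>I. (\<lambda>j. a (r j) k) \<longlonglongrightarrow> x k" "P \<subseteq> I"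
      "\<forall>j. \<forall>k\<in>I. (a (r j) k < x k \<longleftrightarrow> k \<in> P)"
      using subseq_pattern[OF fI bnd] by blast
    define x' where "x' = (\<lambda>k. if k \<in> I then x k else 0)"
    define J' where "J' = {k \<in> P. \<exists>w. x k = v k \<bullet> lat w}"
    have J'I: "J' \<subseteq> I" using rx(3) by (auto simp: J'_def)
    have xnn: "x k \<ge> 0" if "k \<in> I" for k
      using rx(2) that a_nn by (intro LIMSEQ_le_const[of "\<lambda>j. a (r j) k" "x k" 0]) auto
    have "x' \<in> nbox I" using xnn by (auto simp: x'_def nbox_def)
    then have x'X: "x' \<in> Xset v I" using ci by (simp add: CI_def')
    have x'XJ: "x' \<in> XJ v I J'"
      unfolding XJ_def
    proof (intro CollectI conjI ballI x'X)
      fix k assume k: "k \<in> J'"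
      then have kI: "k \<in> I" "k \<in> P" using J'I by (auto simp: J'_def)
      obtain w where w: "x k = v k \<bullet> lat w" using k by (auto simp: J'_def)
      have "a (r 0) k < x k" using rx(4) kI by blast
      moreover have "a (r 0) k \<ge> 0" using a_nn kI by blast
      ultimately have "x k \<noteq> 0" by simp
      then show "\<exists>z. x' k = v k \<bullet> lat z \<and> x' k \<noteq> 0" using w kI by (auto simp: x'_def)
    qed
    have "A = LJ v I J' x'"
    proof (rule set_eqI)
      fix m :: "int^'a"
      have "finite ((\<lambda>k. v k \<bullet> lat m + x k) ` I)" using fI by simp
      then obtain \<delta> where \<delta>: "\<delta> > 0" "\<forall>t\<in>(\<lambda>k. v k \<bullet> lat m + x k) ` I. t \<noteq> 0 \<longrightarrow> \<delta> \<le> \<bar>t\<bar>"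
        using finite_margin by blast
      have ev1: "\<forall>k\<in>I. eventually (\<lambda>j. dist (a (r j) k) (x k) < \<delta>) sequentially"
      proof
        fix k assume "k \<in> I"
        then show "eventually (\<lambda>j. dist (a (r j) k) (x k) < \<delta>) sequentially"
          using tendstoD[OF rx(2)[rule_format] \<delta>(1)] by blast
      qed
      have ev2: "eventually (\<lambda>j. \<forall>k\<in>I. dist (a (r j) k) (x k) < \<delta>) sequentially"
        by (rule eventually_ball_finite[OF fI ev1])
      have ev3: "eventually (\<lambda>j. to_nat m \<le> r j) sequentially"
        unfolding eventually_sequentially
      proof (intro exI[of _ "to_nat m"] allI impI)
        fix n assume "to_nat m \<le> n"
        moreover have "n \<le> r n" using seq_suble[OF rx(1)] .
        ultimately show "to_nat m \<le> r n" by (rule le_trans)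
      qed
      have "eventually (\<lambda>j. (\<forall>k\<in>I. dist (a (r j) k) (x k) < \<delta>) \<and> to_nat m \<le> r j) sequentially"
        by (rule eventually_conj[OF ev2 ev3])
      then obtain N where N: "\<forall>n\<ge>N. (\<forall>k\<in>I. dist (a (r n) k) (x k) < \<delta>) \<and> to_nat m \<le> r n"
        unfolding eventually_sequentially by blast
      obtain j where j: "\<forall>k\<in>I. dist (a (r j) k) (x k) < \<delta>" "to_nat m \<le> r j"
        using N by blast
      have per: "(0 \<le> v k \<bullet> lat m + a (r j) k) \<longleftrightarrow> (if k \<in> J' then 0 < v k \<bullet> lat m + x k else 0 \<le> v k \<bullet> lat m + x k)"
        if k: "k \<in> I" for k
      proof (cases "v k \<bullet> lat m + x k = 0")
        case False
        have "v k \<bullet> lat m + x k \<in> (\<lambda>k. v k \<bullet> lat m + x k) ` I" using k by (rule imageI)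
        then have "\<delta> \<le> \<bar>v k \<bullet> lat m + x k\<bar>" using \<delta>(2) False by blast
        moreover have "\<bar>a (r j) k - x k\<bar> < \<delta>" using j(1) k by (simp add: dist_real_def)
        ultimately have c: "(0 \<le> v k \<bullet> lat m + a (r j) k \<longleftrightarrow> 0 < v k \<bullet> lat m + x k) \<and>
                         (0 \<le> v k \<bullet> lat m + a (r j) k \<longleftrightarrow> 0 \<le> v k \<bullet> lat m + x k)"
          by (rule real_aux3[OF \<delta>(1)])
        show ?thesis
        proof (cases "k \<in> J'")
          case True
          then show ?thesis using conjunct1[OF c] by simp
        next
          case False
          then show ?thesis using conjunct2[OF c] by simp
        qed
      next
        case True
        then have "x k = v k \<bullet> lat (- m)" by (simp add: lat_minus inner_minus_right)
        then have ex: "\<exists>w. x k = v k \<bullet> lat w" by (rule exI)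
        have J'P: "k \<in> J' \<longleftrightarrow> k \<in> P" unfolding J'_def using ex by simp
        have aP: "a (r j) k < x k \<longleftrightarrow> k \<in> P" using rx(4) k by blast
        show ?thesis
        proof (cases "k \<in> P")
          case True
          then have h: "a (r j) k < x k" "k \<in> J'" using aP J'P by simp_all
          have "\<not> 0 \<le> v k \<bullet> lat m + a (r j) k" using h(1) \<open>v k \<bullet> lat m + x k = 0\<close> by linarith
          moreover have "\<not> 0 < v k \<bullet> lat m + x k" using \<open>v k \<bullet> lat m + x k = 0\<close> by simp
          ultimately show ?thesis using h(2) by simp
        next
          case False
          then have h: "\<not> a (r j) k < x k" "k \<notin> J'" using aP J'P by simp_all
          have "0 \<le> v k \<bullet> lat m + a (r j) k" using h(1) \<open>v k \<bullet> lat m + x k = 0\<close> by linarith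
          moreover have "0 \<le> v k \<bullet> lat m + x k" using \<open>v k \<bullet> lat m + x k = 0\<close> by simp
          ultimately show ?thesis using h(2) by simp
        qed
      qed
      have "m \<in> A \<longleftrightarrow> (\<forall>k\<in>I. 0 \<le> v k \<bullet> lat m + a (r j) k)" using zmem j(2) by blast
      also have "\<dots> \<longleftrightarrow> (\<forall>k\<in>J'. 0 < v k \<bullet> lat m + x' k) \<and> (\<forall>k\<in>I - J'. 0 \<le> v k \<bullet> lat m + x' k)"
      proof -
        have h1: "0 \<le> v k \<bullet> lat m + a (r j) k \<longleftrightarrow> 0 < v k \<bullet> lat m + x' k" if "k \<in> J'" for k
        proof -
          have "k \<in> I" using that J'I by blast
          then show ?thesis using per[of k] that by (simp add: x'_def)
        qed
        have h2: "0 \<le> v k \<bullet> lat m + a (r j) k \<longleftrightarrow> 0 \<le> v k \<bullet> lat m + x' k" if "k \<in> I - J'" for k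
          using per[of k] that by (simp add: x'_def)
        show ?thesis using h1 h2 J'I by blast
      qed
      also have "\<dots> \<longleftrightarrow> m \<in> LJ v I J' x'" by (simp add: LJ_def)
      finally show "m \<in> A \<longleftrightarrow> m \<in> LJ v I J' x'" .
    qed
    then show ?thesis using x'XJ J'I by blast
  qed
qed

lemma decomp:
  assumes ci: "completely_irrational v I" and fI: "finite I"
  shows "Xi v I = (\<Union>J\<in>Pow I. {LJ v I J x | x. x \<in> XJ v I J}) \<union> (\<Union>i\<in>I. Xi v (I - {i}))"
proof
  show "Xi v I \<subseteq> (\<Union>J\<in>Pow I. {LJ v I J x | x. x \<in> XJ v I J}) \<union> (\<Union>i\<in>I. Xi v (I - {i}))"
    using sub_dir[OF ci fI] by blast
  show "(\<Union>J\<in>Pow I. {LJ v I J x | x. x \<in> XJ v I J}) \<union> (\<Union>i\<in>I. Xi v (I - {i})) \<subseteq> Xi v I"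
    using sup_LJ[OF ci fI] sup_sub[OF ci fI] by blast
qed

lemma Xi_empty: "Xi v {} = {UNIV}"
proof -
  have L: "Lcone v {} = UNIV" by (simp add: Lcone_def)
  have "A \<in> Xi v {} \<longleftrightarrow> A = UNIV" for A
  proof
    assume "A \<in> Xi v {}"
    then have h: "\<forall>F. finite F \<longrightarrow> (\<forall>m\<in>F. m \<in> A)" unfolding Xi_char L by simp
    show "A = UNIV"
    proof (rule set_eqI)
      fix m show "m \<in> A \<longleftrightarrow> m \<in> UNIV" using h[rule_format, of "{m}"] by simp
    qed
  next
    assume "A = UNIV"
    then show "A \<in> Xi v {}" unfolding Xi_char L by simp
  qed
  then show ?thesis by blast
qed



definition GG :: "(nat \<Rightarrow> real^'n) \<Rightarrow> nat set \<Rightarrow> (int^'n) set set" where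
  "GG v I = (\<Union>J\<in>Pow I. {LJ v I J x | x. x \<in> XJ v I J})"

lemma all_sub:
  assumes ci0: "completely_irrational v I0" and fI0: "finite I0" and sub: "I \<subseteq> I0"
  shows "Xi v I = (\<Union>I'\<in>Pow I - {{}}. GG v I') \<union> {UNIV}"
proof -
  have fI: "finite I" using finite_subset[OF sub fI0] .
  from fI sub show ?thesis
  proof (induction I rule: finite_psubset_induct)
    case (psubset I)
    show ?case
    proof (cases "I = {}")
      case True
      then show ?thesis by (simp add: Xi_empty)
    next
      case False
      have ci: "completely_irrational v I" using CI_sub[OF ci0 psubset.prems] .
      have IH: "Xi v (I - {i}) = (\<Union>I'\<in>Pow (I - {i}) - {{}}. GG v I') \<union> {UNIV}" if "i \<in> I" for i
        using psubset.IH[of "I - {i}"] that psubset.prems by blast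
      have D: "Xi v I = GG v I \<union> (\<Union>i\<in>I. Xi v (I - {i}))"
        using decomp[OF ci psubset.hyps] by (simp add: GG_def)
      also have "\<dots> = GG v I \<union> (\<Union>i\<in>I. (\<Union>I'\<in>Pow (I - {i}) - {{}}. GG v I') \<union> {UNIV})"
        using IH by simp
      also have "\<dots> = (\<Union>I'\<in>Pow I - {{}}. GG v I') \<union> {UNIV}"
      proof
        show "GG v I \<union> (\<Union>i\<in>I. (\<Union>I'\<in>Pow (I - {i}) - {{}}. GG v I') \<union> {UNIV})
              \<subseteq> (\<Union>I'\<in>Pow I - {{}}. GG v I') \<union> {UNIV}"
          using False by blast
        show "(\<Union>I'\<in>Pow I - {{}}. GG v I') \<union> {UNIV}
              \<subseteq> GG v I \<union> (\<Union>i\<in>I. (\<Union>I'\<in>Pow (I - {i}) - {{}}. GG v I') \<union> {UNIV})"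
        proof
          fix A assume A: "A \<in> (\<Union>I'\<in>Pow I - {{}}. GG v I') \<union> {UNIV}"
          show "A \<in> GG v I \<union> (\<Union>i\<in>I. (\<Union>I'\<in>Pow (I - {i}) - {{}}. GG v I') \<union> {UNIV})"
          proof (cases "A = UNIV")
            case True
            then show ?thesis using False by blast
          next
            case nU: False
            then obtain I' where I': "I' \<subseteq> I" "I' \<noteq> {}" "A \<in> GG v I'" using A by blast
            show ?thesis
            proof (cases "I' = I")
              case True
              then show ?thesis using I' by blast
            next
              case False
              then obtain i where i: "i \<in> I" "i \<notin> I'" using I'(1) by blast
              then have "I' \<in> Pow (I - {i}) - {{}}" using I' by blast
              then show ?thesis using I'(3) i(1) by blast
            qed
          qed
        qed
      qed
      finally show ?thesis .
    qed
  qed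
qed

theorem mainTheorem4:
  fixes v :: "nat \<Rightarrow> real^'n" and d :: nat
  assumes d_pos: "d \<ge> 1"
    and indep: "independent (v ` {1..d})" and inj: "inj_on v {1..d}"
    and unit: "\<forall>i\<in>{1..d}. norm (v i) = 1"
    and rci: "RCI v d"
    and ci: "completely_irrational v {1..d}"
  shows "(Xi v {1..d} =
           (\<Union>J\<in>Pow {1..d}. {LJ v {1..d} J x | x. x \<in> XJ v {1..d} J})
           \<union> (\<Union>i\<in>{1..d}. Xi v ({1..d} - {i}))) \<and>
         (Xi v {1..d} =
           (\<Union>I\<in>Pow {1..d} - {{}}. \<Union>J\<in>Pow I. {LJ v I J x | x. x \<in> XJ v I J})
           \<union> {UNIV})"
proof
  show "Xi v {1..d} =
           (\<Union>J\<in>Pow {1..d}. {LJ v {1..d} J x | x. x \<in> XJ v {1..d} J})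
           \<union> (\<Union>i\<in>{1..d}. Xi v ({1..d} - {i}))"
    by (rule decomp[OF ci finite_atLeastAtMost])
  show "Xi v {1..d} =
           (\<Union>I\<in>Pow {1..d} - {{}}. \<Union>J\<in>Pow I. {LJ v I J x | x. x \<in> XJ v I J})
           \<union> {UNIV}"
    using all_sub[OF ci finite_atLeastAtMost subset_refl] by (simp add: GG_def)
qed

end
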